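(* As Laurent series in $z$, $$\sum_{n\ge0}\binom{2n}{n}z^n=\left(9\frac{1+z}{1-z}+3\right)\Psi(-z)-(4z+8)\Psi^3(-z)-\left(12z^2+12z+3\right)\Psi^5(-z)\quad\text{modulo }27.$$
   Context: $\Psi(z)=\prod_{j\ge0}(1+z^{3^j})$, so $\Psi(-z)=\prod_{j\ge0}(1-z^{3^j})$. Rational functions are expanded as power series in $z$; "modulo $27$" means coefficientwise congruence. *)

theory Defs
  imports "HOL-Computational_Algebra.Formal_Power_Series" "HOL-Number_Theory.Cong"
begin

text \<open>Psi(-z) = prod_{j>=0} (1 - z^(3^j)) as a formal power series over int.
  The n-th coefficient of the infinite product equals the n-th coefficient of the
  finite partial product over j < n+1 (all further factors are 1 + O(z^(n+1))).\<close>
definition Psi_neg :: "int fps" where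
  "Psi_neg = Abs_fps (\<lambda>n. fps_nth (\<Prod>j<Suc n. (1 - fps_X ^ (3 ^ j))) n)"

definition geom :: "int fps" where
  "geom = Abs_fps (\<lambda>_. 1)"

lemma geom_inverse: "(1 - fps_X) * geom = 1"
proof -
  have "fps_X * geom = geom - 1"
    by (simp add: geom_def fps_eq_iff fps_X_mult_nth)
  then show ?thesis by (simp add: algebra_simps)
qed

definition central_binom_fps :: "int fps" where
  "central_binom_fps = Abs_fps (\<lambda>n. int ((2 * n) choose n))"

end

theory Submission
  imports Defs
begin

unbundle fps_syntax

lemma poly_id:
  fixes z B :: "'a::idom"
  shows "(1-4*z)*(1+3*B)*(((1-z)*(9*(1+z)+3*(1-z))) - (4*z+8)*((1-z)*(1+3*B)) - (12*z^2+12*z+3)*(1+3*B)^2)^2 - (1-z)^5 = 27 * ((-3) * B^1 + (54) * B^2 + (274) * B^3 + (279) * B^4 + (81) * B^5 + (-1) * z^1 + (48) * z^1 * B^1 + (108) * z^1 * B^2 + (-20) * z^1 * B^3 + (468) * z^1 * B^4 + (324) * z^1 * B^5 + (10) * z^2 + (-24) * z^2 * B^1 + (-540) * z^2 * B^2 + (-2012) * z^2 * B^3 + (-2880) * z^2 * B^4 + (-648) * z^2 * B^5 + (-10) * z^3 + (-312) * z^3 * B^1 + (-2160) * z^3 * B^2 + (-6736) * z^3 * B^3 + (-10080) * z^3 * B^4 + (-5184) * z^3 * B^5 + (-51) * z^4 + (-588) * z^4 * B^1 + (-3024) * z^4 * B^2 + (-8512) * z^4 * B^3 + (-13104) * z^4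 * B^4 + (-9072) * z^4 * B^5 + (-29) * z^5 + (-336) * z^5 * B^1 + (-1728) * z^5 * B^2 + (-4864) * z^5 * B^3 + (-7488) * z^5 * B^4 + (-5184) * z^5 * B^5)"
  by algebra

lemma alg:
  fixes z w g P B :: "'a::idom"
  assumes w: "w = 1 - z" and wg: "w*g = 1" and wP: "w*P^2 = 1 + 3*B"
  shows "(1-4*z)*((9*((1+z)*g)+3)*P - (4*z+8)*P^3 - (12*z^2+12*z+3)*P^5)^2 - 1 = 27 * (g^5 * ((-3) * B^1 + (54) * B^2 + (274) * B^3 + (279) * B^4 + (81) * B^5 + (-1) * z^1 + (48) * z^1 * B^1 + (108) * z^1 * B^2 + (-20) * z^1 * B^3 + (468) * z^1 * B^4 + (324) * z^1 * B^5 + (10) * z^2 + (-24) * z^2 * B^1 + (-540) * z^2 * B^2 + (-2012) * z^2 * B^3 + (-2880) * z^2 * B^4 + (-648) * z^2 * B^5 + (-10) * z^3 + (-312) * z^3 * B^1 + (-2160) * z^3 * B^2 + (-6736) * z^3 * B^3 + (-10080) * z^3 * B^4 + (-5184) * z^3 * B^5 + (-51) * z^4 + (-588) * z^4 * B^1 + (-3024) * z^4 * B^2 + (-8512) * z^4 * B^3 + (-13104) * z^4 * B^4 + (-9072) * z^4 * B^5 + (-29) * z^5 + (-336) * z^5 * B^1 + (-1728) * z^5 * B^2 + (-4864) * z^5 * B^3 + (-7488) * z^5 * B^4 + (-5184) * z^5 * B^5))"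
proof -
  define S where "S = (9*((1+z)*g)+3) - (4*z+8)*P^2 - (12*z^2+12*z+3)*P^4"
  have R: "(9*((1+z)*g)+3)*P - (4*z+8)*P^3 - (12*z^2+12*z+3)*P^5 = P * S"
    unfolding S_def by algebra
  have e1: "w^5 * ((1-4*z)*(P*S)^2 - 1) = (1-4*z)*(w*P^2)*(w^2*S)^2 - w^5" by algebra
  have e2: "w^2*S = w*(9*(1+z)*(w*g) + 3*w) - (4*z+8)*w*(w*P^2) - (12*z^2+12*z+3)*(w*P^2)^2"
    unfolding S_def by algebra
  have e3: "w^5 * ((1-4*z)*(P*S)^2 - 1) = 27 * ((-3) * B^1 + (54) * B^2 + (274) * B^3 + (279) * B^4 + (81) * B^5 + (-1) * z^1 + (48) * z^1 * B^1 + (108) * z^1 * B^2 + (-20) * z^1 * B^3 + (468) * z^1 * B^4 + (324) * z^1 * B^5 + (10) * z^2 + (-24) * z^2 * B^1 + (-540) * z^2 * B^2 + (-2012) * z^2 * B^3 + (-2880) * z^2 * B^4 + (-648) * z^2 * B^5 + (-10) * z^3 + (-312) * z^3 * B^1 + (-2160) * z^3 * B^2 + (-6736) * z^3 * B^3 + (-10080) * z^3 * B^4 + (-5184) * z^3 * B^5 + (-51) * z^4 + (-588) * z^4 * B^1 + (-3024) * z^4 * B^2 + (-8512) * z^4 * B^3 + (-13104) * z^4 * B^4 + (-9072) * z^4 * B^5 + (-29) * z^5 + (-336) * z^5 * B^1 + (-1728) * z^5 * B^2 + (-4864) * z^5 * B^3 + (-7488) * z^5 * B^4 + (-5184) * z^5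 * B^5)"
    unfolding e1 e2 wg wP using poly_id[of z B] unfolding w by (simp add: mult.assoc)
  have "(1-4*z)*(P*S)^2 - 1 = (w*g)^5 * ((1-4*z)*(P*S)^2 - 1)" by (simp add: wg)
  also have "\<dots> = g^5 * (w^5 * ((1-4*z)*(P*S)^2 - 1))" by algebra
  finally show ?thesis unfolding R e3 by simp
qed

definition mdvd :: "int \<Rightarrow> int fps \<Rightarrow> bool" where
  "mdvd m f \<longleftrightarrow> (\<forall>n. m dvd f $ n)"

lemma mdvd_diff: "mdvd m f \<Longrightarrow> mdvd m g \<Longrightarrow> mdvd m (f - g)"
  by (simp add: mdvd_def)

lemma mdvd_add: "mdvd m f \<Longrightarrow> mdvd m g \<Longrightarrow> mdvd m (f + g)"
  by (simp add: mdvd_def)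

lemma mdvd_mult_left: "mdvd m f \<Longrightarrow> mdvd m (f * g)"
  unfolding mdvd_def fps_mult_nth by (auto intro!: dvd_sum)

lemma mdvd_mult_right: "mdvd m f \<Longrightarrow> mdvd m (g * f)"
  using mdvd_mult_left[of m f g] by (simp add: mult.commute)

lemma mdvd_numeral: "mdvd (numeral k) (numeral k * f)"
  unfolding mdvd_def by (simp add: numeral_fps_const)

lemma mdvd_cong_mult:
  assumes "mdvd m (a - b)" "mdvd m (c - d)" shows "mdvd m (a*c - b*d)"
proof -
  have "a*c - b*d = (a-b)*c + b*(c-d)" by (simp add: algebra_simps)
  thus ?thesis using assms by (simp add: mdvd_add mdvd_mult_left mdvd_mult_right)
qed

lemma mdvd_cancel:
  assumes h: "mdvd m (E*F)" and c: "coprime m (F $ 0)"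
  shows "mdvd m E"
  unfolding mdvd_def
proof
  fix n show "m dvd E $ n"
  proof (induction n rule: less_induct)
    case (less n)
    have "(E*F) $ n = (\<Sum>i<n. E $ i * F $ (n-i)) + E $ n * F $ 0"
      unfolding fps_mult_nth atLeast0AtMost lessThan_Suc_atMost[symmetric] sum.lessThan_Suc by simp
    moreover have "m dvd (\<Sum>i<n. E $ i * F $ (n-i))" using less by (auto intro!: dvd_sum)
    moreover have "m dvd (E*F) $ n" using h by (simp add: mdvd_def)
    ultimately have "m dvd E $ n * F $ 0" by (metis dvd_add_right_iff)
    thus ?case using c by (simp add: coprime_dvd_mult_left_iff)
  qed
qed

definition PN :: "nat \<Rightarrow> int fps" where
  "PN N = (\<Prod>j<N. (1 - fps_X ^ (3 ^ j)))"

lemma PN_0th: "PN N $ 0 = 1"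
  unfolding PN_def by (induction N) auto

lemma cube_id: "(1 - y) ^ 3 = (1 - y ^ 3) + 3 * (y^2 - y :: int fps)"
  by algebra

lemma frob: "mdvd 3 (PN N ^ 3 - (\<Prod>j<N. (1 - fps_X ^ (3 ^ Suc j)) :: int fps))"
proof (induction N)
  case 0
  then show ?case by (simp add: PN_def mdvd_def)
next
  case (Suc N)
  have a: "PN (Suc N) ^ 3 = PN N ^ 3 * (1 - fps_X ^ (3 ^ N)) ^ 3"
    by (simp add: PN_def power_mult_distrib)
  have y3: "(fps_X ^ (3 ^ N) :: int fps) ^ 3 = fps_X ^ (3 ^ Suc N)"
    by (simp add: power_mult[symmetric] mult.commute)
  have b: "mdvd 3 ((1 - fps_X ^ (3 ^ N)) ^ 3 - (1 - fps_X ^ (3 ^ Suc N) :: int fps))"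
  proof -
    have "(1 - fps_X ^ (3 ^ N)) ^ 3 - (1 - fps_X ^ (3 ^ Suc N) :: int fps)
       = 3 * ((fps_X ^ (3 ^ N))^2 - fps_X ^ (3 ^ N))"
      unfolding y3[symmetric] by algebra
    thus ?thesis using mdvd_numeral[of "num.Bit1 num.One" "(fps_X ^ (3 ^ N))^2 - fps_X ^ (3 ^ N)"] by simp
  qed
  show ?case unfolding a prod.lessThan_Suc by (rule mdvd_cong_mult[OF Suc b])
qed

lemma PN_Suc1: "PN (Suc N) = PN N * (1 - fps_X ^ (3 ^ N))"
  by (simp add: PN_def)

lemma PN_Suc2: "PN (Suc N) = (1 - fps_X) * (\<Prod>j<N. (1 - fps_X ^ (3 ^ Suc j)))"
  unfolding PN_def prod.lessThan_Suc_shift by simp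

lemma PN_mod3: "mdvd 3 ((1 - fps_X ^ (3 ^ N)) - (1 - fps_X) * PN N ^ 2)"
proof -
  have "mdvd 3 ((1 - fps_X) * PN N ^ 3 - (1 - fps_X) * (\<Prod>j<N. (1 - fps_X ^ (3 ^ Suc j))))"
    using mdvd_mult_right[OF frob, of "1 - fps_X" N] by (simp add: algebra_simps)
  hence "mdvd 3 (PN N * (1 - fps_X ^ (3 ^ N)) - (1 - fps_X) * PN N ^ 3)"
    using mdvd_diff[of 3 0] unfolding PN_Suc1[symmetric] PN_Suc2
    by (metis (no_types, lifting) diff_zero minus_diff_eq mdvd_def dvd_minus_iff fps_neg_nth)
  hence "mdvd 3 (((1 - fps_X ^ (3 ^ N)) - (1 - fps_X) * PN N ^ 2) * PN N)"
    by (simp add: algebra_simps power3_eq_cube power2_eq_square)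
  thus ?thesis by (rule mdvd_cancel) (simp add: PN_0th)
qed

lemma lt3pow: "n < (3::nat) ^ n"
  by (induction n) auto

lemma Psi_PN: "k < N \<Longrightarrow> Psi_neg $ k = PN N $ k"
proof -
  have "PN M $ k = PN (Suc k) $ k" if "Suc k \<le> M" for M
    using that
  proof (induction M rule: dec_induct)
    case base then show ?case by simp
  next
    case (step M)
    have "k < 3 ^ M" using step(1) lt3pow[of M] by simp
    then show ?case using step(3)
      by (simp add: PN_Suc1 right_diff_distrib fps_X_power_mult_right_nth)
  qed
  moreover assume "k < N"
  ultimately show ?thesis by (simp add: Psi_neg_def PN_def)
qed

lemma trunc_mult:
  assumes "\<forall>k\<le>n. f $ k = g $ k" "\<forall>k\<le>n. f' $ k = g' $ k"
  shows "\<forall>k\<le>n. (f * f') $ k = (g * g') $ k"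
  using assms by (auto simp: fps_mult_nth intro!: sum.cong)

lemma trunc_pow:
  assumes "\<forall>k\<le>n. f $ k = g $ k"
  shows "\<forall>k\<le>n. (f ^ i) $ k = (g ^ i) $ k"
proof (induction i)
  case 0 then show ?case by simp
next
  case (Suc i) then show ?case using trunc_mult[OF assms Suc.IH] by simp
qed

lemma Psi_mod3: "mdvd 3 ((1 - fps_X) * Psi_neg ^ 2 - 1)"
  unfolding mdvd_def
proof
  fix n
  have e: "\<forall>k\<le>n. Psi_neg $ k = PN (Suc n) $ k" using Psi_PN by auto
  have "((1 - fps_X) * Psi_neg ^ 2) $ n = ((1 - fps_X) * PN (Suc n) ^ 2) $ n"
    using trunc_mult[OF _ trunc_pow[OF e], of "1 - fps_X" "1 - fps_X" 2] by simp
  moreover have "3 dvd ((1 - fps_X ^ (3 ^ Suc n)) - (1 - fps_X) * PN (Suc n) ^ 2) $ n"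
    using PN_mod3[of "Suc n"] by (simp add: mdvd_def)
  moreover have "n \<noteq> 3 ^ Suc n" using lt3pow[of "Suc n"] by simp
  ultimately show "3 dvd ((1 - fps_X) * Psi_neg ^ 2 - 1) $ n"
    by (simp add: dvd_diff_commute)
qed

lemma binom_aux:
  fixes a b c n :: nat
  assumes 1: "Suc n * a = Suc (Suc (2*n)) * b" and 2: "Suc (2*n) * c = b * Suc n"
  shows "Suc n * a = (4*n+2) * c"
proof -
  have "Suc n * (Suc n * a) = Suc n * ((4*n+2) * c)"
  proof -
    have "Suc n * (Suc n * a) = 2 * (b * Suc n) * Suc n" using 1 by simp
    also have "\<dots> = 2 * (Suc (2*n) * c) * Suc n" using 2 by simp
    also have "\<dots> = Suc n * ((4*n+2) * c)" by simp
    finally show ?thesis .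
  qed
  thus ?thesis by (metis mult_left_cancel nat.simps(3))
qed

lemma binom_rec: "Suc n * (Suc (Suc (2*n)) choose Suc n) = (4*n+2) * (2*n choose n)"
proof -
  have s: "(Suc (2*n) choose Suc n) = (Suc (2*n) choose n)"
    using binomial_symmetric[of n "Suc (2*n)"] by simp
  have 1: "Suc n * (Suc (Suc (2*n)) choose Suc n) = Suc (Suc (2*n)) * (Suc (2*n) choose n)"
    using Suc_times_binomial[of n "Suc (2*n)"] by simp
  have 2: "Suc (2*n) * (2*n choose n) = (Suc (2*n) choose n) * Suc n"
    using Suc_times_binomial_eq[of "2*n" n] s by simp
  show ?thesis by (rule binom_aux[OF 1 2])
qed

lemma cb_deriv: "(1 - 4 * fps_X) * fps_deriv central_binom_fps = 2 * central_binom_fps"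
proof (rule fps_ext)
  fix n
  have r: "int (Suc n) * int (Suc (Suc (2*n)) choose Suc n) = int (4*n+2) * int (2*n choose n)"
    using binom_rec[of n] by (metis of_nat_mult)
  show "((1 - 4 * fps_X) * fps_deriv central_binom_fps) $ n = (2 * central_binom_fps) $ n"
  proof (cases n)
    case 0 then show ?thesis by (simp add: central_binom_fps_def numeral_fps_const algebra_simps)
  next
    case (Suc m)
    show ?thesis using r Suc
      by (simp add: central_binom_fps_def numeral_fps_const algebra_simps ring_distribs)
  qed
qed

lemma cb_sq: "(1 - 4 * fps_X) * central_binom_fps ^ 2 = 1"
proof -
  let ?C = central_binom_fps
  let ?D = "(1 - 4 * fps_X) * (?C * ?C)"
  have d4: "fps_deriv (1 - 4 * fps_X :: int fps) = - 4" by simp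
  have "fps_deriv ?D = - 4 * (?C * ?C) + 2 * ?C * ((1 - 4 * fps_X) * fps_deriv ?C)"
    by (simp add: d4 algebra_simps)
  also have "\<dots> = 0" unfolding cb_deriv by (simp add: algebra_simps)
  finally have "?D = fps_const (?D $ 0)" by (simp only: fps_deriv_eq_0_iff)
  moreover have "?D $ 0 = 1" by (simp add: central_binom_fps_def)
  ultimately show ?thesis by (simp add: power2_eq_square)
qed

definition h4 :: "int fps" where "h4 = Abs_fps (\<lambda>n. 4 ^ n)"

lemma h4_inv: "h4 * (1 - 4 * fps_X) = 1"
proof (rule fps_ext)
  fix n show "(h4 * (1 - 4 * fps_X)) $ n = (1::int fps) $ n"
    by (cases n) (simp_all add: h4_def numeral_fps_const algebra_simps)
qed

theorem theorem12p2:
  shows "\<forall>n. [fps_nth central_binom_fps n =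
     fps_nth ((9 * ((1 + fps_X) * geom) + 3) * Psi_neg
              - (4 * fps_X + 8) * Psi_neg ^ 3
              - (12 * fps_X ^ 2 + 12 * fps_X + 3) * Psi_neg ^ 5) n] (mod 27)"
proof -
  let ?C = central_binom_fps
  define R where "R = (9 * ((1 + fps_X) * geom) + 3) * Psi_neg
              - (4 * fps_X + 8) * Psi_neg ^ 3
              - (12 * fps_X ^ 2 + 12 * fps_X + 3) * Psi_neg ^ 5"
  define B where "B = Abs_fps (\<lambda>n. ((1 - fps_X) * Psi_neg ^ 2 - 1) $ n div 3)"
  have wP: "(1 - fps_X) * Psi_neg ^ 2 = 1 + 3 * B"
  proof (rule fps_ext)
    fix n
    have "3 dvd ((1 - fps_X) * Psi_neg ^ 2 - 1) $ n" using Psi_mod3 by (simp add: mdvd_def)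
    hence "3 * (((1 - fps_X) * Psi_neg ^ 2 - 1) $ n div 3) = ((1 - fps_X) * Psi_neg ^ 2 - 1) $ n"
      by simp
    thus "((1 - fps_X) * Psi_neg ^ 2) $ n = (1 + 3 * B) $ n"
      by (simp add: B_def numeral_fps_const)
  qed
  obtain Q where Q: "(1 - 4 * fps_X) * R ^ 2 - 1 = 27 * Q"
    using alg[OF refl geom_inverse wP] unfolding R_def by blast
  have "mdvd 27 ((1 - 4 * fps_X) * R ^ 2 - 1)"
    unfolding Q by (rule mdvd_numeral)
  hence "mdvd 27 (h4 * ((1 - 4 * fps_X) * R ^ 2 - 1))" by (rule mdvd_mult_right)
  moreover have "h4 * ((1 - 4 * fps_X) * R ^ 2 - 1) = (R - ?C) * (R + ?C)"
  proof -
    have "h4 * ((1 - 4 * fps_X) * R ^ 2 - 1) = h4 * ((1 - 4 * fps_X) * R ^ 2 - (1 - 4 * fps_X) * ?C ^ 2)"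
      by (simp add: cb_sq)
    also have "\<dots> = (h4 * (1 - 4 * fps_X)) * (R ^ 2 - ?C ^ 2)" by (simp add: algebra_simps)
    also have "\<dots> = R ^ 2 - ?C ^ 2" by (simp only: h4_inv mult_1)
    also have "\<dots> = (R - ?C) * (R + ?C)" by algebra
    finally show ?thesis .
  qed
  ultimately have m: "mdvd 27 ((R - ?C) * (R + ?C))" by simp
  have P0: "Psi_neg $ 0 = 1" by (simp add: Psi_neg_def)
  have g0: "geom $ 0 = 1" by (simp add: geom_def)
  have "(R + ?C) $ 0 = 2"
    by (simp add: R_def P0 g0 fps_power_zeroth central_binom_fps_def)
  hence "coprime 27 ((R + ?C) $ 0)" by simp
  from mdvd_cancel[OF m this] have "mdvd 27 (R - ?C)" .
  thus ?thesis unfolding R_def[symmetric]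
    by (auto simp: mdvd_def cong_iff_dvd_diff dvd_diff_commute)
qed

end
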